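(* Let $A\in\mathbb{R}^{m\times n}$, $\sigma>0$, and consider $y=Ax+\epsilon$ with $\epsilon\sim\mathcal{N}(0,\sigma^2I_m)$ independent of $x$, where $x$ has prior $$\pi(x)=\sum_{j=1}^M w_j\,\varphi(x;\mu_j,\tau_j^2I_n),\qquad \mu_j\in\mathbb{R}^n,\ \tau_j>0,\ w_j\ge0,\ \sum_{j=1}^Mw_j=1.$$ Fix $y^\star\in\mathbb{R}^m$. Let $\Sigma_j:=\sigma^2I_m+\tau_j^2AA^\top$, $s_j(y^\star):=\frac12\|\Sigma_j^{-1/2}(y^\star-A\mu_j)\|_2^2$, and define the selection score $\ell_j(y^\star):=s_j(y^\star)+\frac12\log\det(\Sigma_j)$. Let $\ell_{(1)}(y^\star)\le\ell_{(2)}(y^\star)$ be the smallest and second-smallest among $\{\ell_j(y^\star)\}_{j=1}^M$, and $\delta_\ell(y^\star):=\frac1m(\ell_{(2)}(y^\star)-\ell_{(1)}(y^\star))$. Assume: (1) there is $C>1$ with $1/C\le w_i/w_j\le C$ for all $i,j$; (2) there is a unique minimizer $j^\star=\arg\min_j\ell_j(y^\star)$ and $\delta_\ell(y^\star)\ge\delta_0$ for some constant $\delta_0>0$. Let $J$ be a random index with $$\Pr(J=j)=\tilde w_j(y^\star):=\frac{w_j\,\varphi(y^\star;A\mu_j,\Sigma_j)}{\sum_{i=1}^Mw_i\,\varphi(y^\star;A\mu_i,\Sigma_i)}.$$ Then (i) $\Pr(J\ne j^\star)\le CM e^{-m\delta_0}$; and (ii) the posterior $\pi(\cdot\mid y^\star)$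 of $x$ given $y=y^\star$ satisfies $$\big\|\pi(\cdot\mid y^\star)-\mathcal{N}(m_{j^\star}(y^\star),\Sigma_{\mathrm{post},j^\star})\big\|_{\mathsf{TV}}\le CMe^{-m\delta_0},$$ where $\Sigma_{\mathrm{post},j}=\big(\tau_j^{-2}I_n+\tfrac1{\sigma^2}A^\top A\big)^{-1}$ and $m_j(y^\star)=\Sigma_{\mathrm{post},j}\big(\tau_j^{-2}\mu_j+\tfrac1{\sigma^2}A^\top y^\star\big)$.
   Context: $\varphi(\cdot;\mu,\Sigma)$ denotes the density of $\mathcal{N}(\mu,\Sigma)$; $\|\cdot\|_{\mathsf{TV}}$ is total variation distance; $\pi(\cdot\mid y^\star)$ is the Bayesian posterior under the stated prior and likelihood $y\mid x\sim\mathcal{N}(Ax,\sigma^2I_m)$. *)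

theory Defs
  imports "HOL-Analysis.Analysis"
begin

definition gauss_pdf :: "real^'d \<Rightarrow> real^'d^'d \<Rightarrow> real^'d \<Rightarrow> real" where
  "gauss_pdf mu S x =
     exp (- (1/2) * ((x - mu) \<bullet> (matrix_inv S *v (x - mu))))
     / sqrt ((2 * pi) ^ CARD('d) * det S)"

definition normal_measure :: "real^'d \<Rightarrow> real^'d^'d \<Rightarrow> (real^'d) measure" where
  "normal_measure mu S = density lborel (\<lambda>x. ennreal (gauss_pdf mu S x))"

definition tv_dist :: "'a measure \<Rightarrow> 'a measure \<Rightarrow> real" where
  "tv_dist P Q = (SUP B \<in> sets P. \<bar>measure P B - measure Q B\<bar>)"

definition mix_prior :: "nat \<Rightarrow> (nat \<Rightarrow> real) \<Rightarrow> (nat \<Rightarrow> real^'n) \<Rightarrow> (nat \<Rightarrow> real)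
    \<Rightarrow> real^'n \<Rightarrow> real" where
  "mix_prior M w mu tau x = (\<Sum>j<M. w j * gauss_pdf (mu j) ((tau j)\<^sup>2 *\<^sub>R mat 1) x)"

definition lin_gauss_lik :: "real^'n^'m \<Rightarrow> real \<Rightarrow> real^'m \<Rightarrow> real^'n \<Rightarrow> real" where
  "lin_gauss_lik A sg y x = gauss_pdf (A *v x) (sg\<^sup>2 *\<^sub>R mat 1) y"

definition bayes_posterior :: "nat \<Rightarrow> (nat \<Rightarrow> real) \<Rightarrow> (nat \<Rightarrow> real^'n) \<Rightarrow> (nat \<Rightarrow> real)
    \<Rightarrow> real^'n^'m \<Rightarrow> real \<Rightarrow> real^'m \<Rightarrow> (real^'n) measure" where
  "bayes_posterior M w mu tau A sg ystar =
     density lborel (\<lambda>x. ennreal (mix_prior M w mu tau x * lin_gauss_lik A sg ystar x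
        / (\<integral>z. mix_prior M w mu tau z * lin_gauss_lik A sg ystar z \<partial>lborel)))"

definition marg_cov :: "real^'n^'m \<Rightarrow> real \<Rightarrow> real \<Rightarrow> real^'m^'m" where
  "marg_cov A sg t = sg\<^sup>2 *\<^sub>R mat 1 + t\<^sup>2 *\<^sub>R (A ** transpose A)"

text \<open>s_j(y) = (1/2) ||Sigma_j^{-1/2}(y - A mu_j)||^2, written as (1/2) r^T Sigma_j^{-1} r.\<close>
definition sel_s :: "real^'n^'m \<Rightarrow> real \<Rightarrow> real^'n \<Rightarrow> real \<Rightarrow> real^'m \<Rightarrow> real" where
  "sel_s A sg mu t y =
     (1/2) * ((y - A *v mu) \<bullet> (matrix_inv (marg_cov A sg t) *v (y - A *v mu)))"

definition sel_score :: "real^'n^'m \<Rightarrow> real \<Rightarrow> real^'n \<Rightarrow> real \<Rightarrow> real^'m \<Rightarrow> real" where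
  "sel_score A sg mu t y = sel_s A sg mu t y + (1/2) * ln (det (marg_cov A sg t))"

definition post_weight :: "nat \<Rightarrow> (nat \<Rightarrow> real) \<Rightarrow> (nat \<Rightarrow> real^'n) \<Rightarrow> (nat \<Rightarrow> real)
    \<Rightarrow> real^'n^'m \<Rightarrow> real \<Rightarrow> real^'m \<Rightarrow> nat \<Rightarrow> real" where
  "post_weight M w mu tau A sg y j =
     w j * gauss_pdf (A *v mu j) (marg_cov A sg (tau j)) y
     / (\<Sum>i<M. w i * gauss_pdf (A *v mu i) (marg_cov A sg (tau i)) y)"

definition post_cov :: "real^'n^'m \<Rightarrow> real \<Rightarrow> real \<Rightarrow> real^'n^'n" where
  "post_cov A sg t = matrix_inv ((1 / t\<^sup>2) *\<^sub>R mat 1 + (1 / sg\<^sup>2) *\<^sub>R (transpose A ** A))"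

definition post_mean :: "real^'n^'m \<Rightarrow> real \<Rightarrow> real^'n \<Rightarrow> real \<Rightarrow> real^'m \<Rightarrow> real^'n" where
  "post_mean A sg mu t y =
     post_cov A sg t *v ((1 / t\<^sup>2) *\<^sub>R mu + (1 / sg\<^sup>2) *\<^sub>R (transpose A *v y))"

end

theory Submission
  imports Defs "HOL-Probability.Probability"
begin


lemma inner_mv_transpose:
  fixes A :: "real^'n^'m"
  shows "x \<bullet> (A *v y) = (transpose A *v x) \<bullet> y"
  by (simp add: inner_vec_def matrix_vector_mult_def transpose_def sum_distrib_left
      sum_distrib_right mult_ac) (rule sum.swap)

lemma one_dim_gauss:
  fixes a b c :: real
  assumes a: "a > 0"
  shows "(\<integral>\<^sup>+y. ennreal (exp (-(1/2) * (a*y^2 + 2*b*y + c))) \<partial>lborel)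
       = ennreal (sqrt (2*pi/a) * exp (-(1/2) * (c - b^2/a)))"
proof -
  let ?K = "sqrt (2*pi/a) * exp (-(1/2) * (c - b^2/a))"
  have eq: "exp (-(1/2) * (a*y^2 + 2*b*y + c)) = ?K * normal_density (-b/a) (1/sqrt a) y" for y
  proof -
    have s: "(1/sqrt a)^2 = 1/a" using a by (simp add: power_divide)
    have "?K * normal_density (-b/a) (1/sqrt a) y
        = (sqrt (2*pi/a) / sqrt (2*pi*(1/a))) * (exp (-(1/2) * (c - b^2/a)) * exp (- ((y - (-b/a))^2) / (2*(1/a))))"
      unfolding normal_density_def s by (simp add: field_simps)
    also have "sqrt (2*pi/a) / sqrt (2*pi*(1/a)) = 1" using a by simp
    also have "exp (-(1/2) * (c - b^2/a)) * exp (- ((y - (-b/a))^2) / (2*(1/a)))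
       = exp (-(1/2) * (a*y^2 + 2*b*y + c))"
      unfolding exp_add[symmetric] using a by (simp add: field_simps power2_eq_square)
    finally show ?thesis by simp
  qed
  have "(\<integral>\<^sup>+y. ennreal (exp (-(1/2) * (a*y^2 + 2*b*y + c))) \<partial>lborel)
      = (\<integral>\<^sup>+y. ennreal ?K * ennreal (normal_density (-b/a) (1/sqrt a) y) \<partial>lborel)"
    by (subst eq, rule nn_integral_cong, rule ennreal_mult) (use a in auto)
  also have "\<dots> = ennreal ?K * (\<integral>\<^sup>+y. ennreal (normal_density (-b/a) (1/sqrt a) y) \<partial>lborel)"
    by (rule nn_integral_cmult) simp
  also have "(\<integral>\<^sup>+y. ennreal (normal_density (-b/a) (1/sqrt a) y) \<partial>lborel) = 1"
    using a by (subst nn_integral_eq_integral) (auto intro!: integrable_normal_density integral_normal_density)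
  finally show ?thesis by simp
qed



lemma det_rowk:
  fixes u :: "real^'d"
  shows "det (\<chi> i j. (if i = j then 1 else 0) + (if i = k then u$j else 0) :: real^'d^'d) = 1 + u$k"
proof -
  define A :: "real^'d^'d" where "A = (\<chi> i j. (if i = j then 1 else 0) + (if i = k then u$j else 0))"
  define x :: "real^'d" where "x = - (\<Sum>j\<in>UNIV-{k}. u$j *s row j A)"
  have rowA: "row j A = axis j 1" if "j \<noteq> k" for j
    using that by (simp add: A_def row_def vec_eq_iff axis_def)
  have x_span: "x \<in> vec.span {row j A |j. j \<noteq> k}"
    unfolding x_def
    by (intro vec.span_neg vec.span_sum vec.span_scale vec.span_base) auto
  have x_eq: "x = - (\<Sum>j\<in>UNIV-{k}. u$j *s axis j 1)"
    unfolding x_def by (intro arg_cong[where f=uminus] sum.cong) (auto simp: rowA)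
  have D: "(\<chi> i. if i = k then row k A + x else row i A)
        = (\<chi> i j. if i = j then (if i = k then 1 + u$k else 1) else 0)"
  proof -
    have xc: "x $ j = (if j = k then 0 else - u$j)" for j
    proof -
      have "(\<Sum>i\<in>UNIV-{k}. u$i * axis i 1 $ j) = (if j = k then 0 else u$j)"
        by (cases "j = k") (auto simp: axis_def if_distrib sum.delta cong: if_cong)
      then show ?thesis by (simp add: x_eq sum_component)
    qed
    show ?thesis
      by (auto simp: vec_eq_iff row_def A_def xc axis_def)
  qed
  have "det A = det (\<chi> i. if i = k then row k A + x else row i A)"
    by (rule det_row_span[OF x_span, symmetric])
  also have "\<dots> = 1 + u$k"
    unfolding D by (subst det_diagonal) (auto simp: prod.If_cases)
  finally show ?thesis unfolding A_def .
qed

lemma matrix_rank1: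
  fixes u :: "real^'d"
  shows "matrix (\<lambda>x. x + (u \<bullet> x) *\<^sub>R axis k 1)
      = (\<chi> i j. (if i = j then 1 else 0) + (if i = k then u$j else 0) :: real^'d^'d)"
  by (simp add: matrix_def vec_eq_iff cart_eq_inner_axis[symmetric]) (simp add: axis_def)



definition vI :: "(real^'d) set \<Rightarrow> (real^'d \<Rightarrow> real) \<Rightarrow> real^'d" where
  "vI I f = (\<Sum>b\<in>I. f b *\<^sub>R b)"

lemma psf_lborel: "product_sigma_finite (\<lambda>_::'a. lborel :: real measure)"
  by (simp add: product_sigma_finite_def sigma_finite_lborel)

lemma meas_mv[measurable]: "(\<lambda>v. (S::real^'d^'d) *v v) \<in> borel_measurable borel"
  by (intro borel_measurable_continuous_onI linear_continuous_on)
     (simp add: linear_linear matrix_vector_mul_linear)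

lemma meas_vI[measurable]:
  assumes "finite I"
  shows "vI I \<in> borel_measurable (PiM I (\<lambda>_. lborel))"
  unfolding vI_def
proof (rule borel_measurable_sum)
  fix b assume "b \<in> I"
  then show "(\<lambda>x. x b *\<^sub>R b) \<in> borel_measurable (PiM I (\<lambda>_. lborel))"
    by measurable
qed

lemma mat1_of_basis:
  fixes S :: "real^'d^'d"
  assumes "\<forall>b\<in>Basis. S *v b = b"
  shows "S = mat 1"
proof -
  have "S *v x = x" for x
  proof -
    have "S *v x = S *v (\<Sum>b\<in>Basis. (x \<bullet> b) *\<^sub>R b)" by (simp add: euclidean_representation)
    also have "\<dots> = (\<Sum>b\<in>Basis. (x \<bullet> b) *\<^sub>R (S *v b))"
      using matrix_vector_mul_linear[of S] by (simp add: linear_sum linear_scale)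
    also have "\<dots> = x" using assms by (simp add: euclidean_representation)
    finally show ?thesis .
  qed
  then show ?thesis by (simp add: matrix_eq)
qed

lemma inner_vI_out:
  assumes "I \<subseteq> Basis" "k \<in> Basis" "k \<notin> I"
  shows "k \<bullet> vI I f = 0"
  using assms unfolding vI_def
  by (auto simp: inner_sum_right inner_Basis intro!: sum.neutral)



declare transpose_matrix_vector[simp del] vector_transpose_matrix[simp del]

lemma mv_scaleR: "(A::real^'n^'m) *v (c *\<^sub>R x) = c *\<^sub>R (A *v x)"
  using linear_scale[OF matrix_vector_mul_linear[of A]] by simp

lemma sym_inner:
  fixes S :: "real^'d^'d"
  assumes "transpose S = S"
  shows "x \<bullet> (S *v y) = y \<bullet> (S *v x)"
  by (metis assms inner_commute inner_mv_transpose)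

lemma quad_add:
  fixes S :: "real^'d^'d"
  assumes "transpose S = S"
  shows "(x + y) \<bullet> (S *v (x + y)) = x \<bullet> (S *v x) + 2 * (x \<bullet> (S *v y)) + y \<bullet> (S *v y)"
  using sym_inner[OF assms, of x y]
  by (simp add: matrix_vector_right_distrib inner_add_left inner_add_right)

lemma quad_scale:
  fixes S :: "real^'d^'d"
  shows "(c *\<^sub>R x) \<bullet> (S *v (c *\<^sub>R x)) = c^2 * (x \<bullet> (S *v x))"
  by (simp add: mv_scaleR power2_eq_square)

lemma gn_aux:
  fixes S :: "real^'d^'d"
  assumes "finite I" "I \<subseteq> Basis" "transpose S = S" "\<forall>x. x \<noteq> 0 \<longrightarrow> 0 < x \<bullet> (S *v x)"
    "\<forall>b\<in>Basis - I. S *v b = b"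
  shows "0 < det S \<and> (\<integral>\<^sup>+f. ennreal (exp (-(1/2) * (vI I f \<bullet> (S *v vI I f)))) \<partial>(PiM I (\<lambda>_. lborel)))
          = ennreal (sqrt ((2*pi)^card I / det S))"
  using assms
proof (induction I arbitrary: S rule: finite_induct)
  case empty
  then have S1: "S = mat 1" by (intro mat1_of_basis) auto
  interpret product_sigma_finite "\<lambda>_::real^'d. lborel :: real measure" by (rule psf_lborel)
  show ?case
    by (simp add: S1 nn_integral_empty vI_def space_PiM_empty emeasure_PiM_empty)
next
  case (insert k I)
  have kB: "k \<in> Basis" and IB: "I \<subseteq> Basis" using insert.prems by auto
  have symS: "transpose S = S" using insert.prems by auto
  have pdS: "\<forall>x. x \<noteq> 0 \<longrightarrow> 0 < x \<bullet> (S *v x)" using insert.prems by auto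
  have outS: "\<forall>b\<in>Basis - insert k I. S *v b = b" using insert.prems by auto
  define a where "a = k \<bullet> (S *v k)"
  have a_pos: "a > 0" unfolding a_def using pdS kB nonzero_Basis by blast
  obtain \<kappa> where kax: "k = axis \<kappa> 1" using axis_inverse[OF kB] by blast
  define u where "u = (1/sqrt a) *\<^sub>R k - (1/a) *\<^sub>R (S *v k)"
  define F :: "real^'d^'d" where "F = matrix (\<lambda>x. x + (u \<bullet> x) *\<^sub>R k)"
  have linF: "linear (\<lambda>x. x + (u \<bullet> x) *\<^sub>R k)"
    by (rule linearI) (auto simp: inner_add_right algebra_simps)
  have Fx: "F *v x = x + (u \<bullet> x) *\<^sub>R k" for x
    unfolding F_def using matrix_vector_mul(2)[OF linF] by metis
  have kk: "k \<bullet> k = 1" using kB by (simp add: inner_Basis)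
  have uk: "u \<bullet> k = 1/sqrt a - 1"
  proof -
    have "(S *v k) \<bullet> k = a" unfolding a_def by (simp add: inner_commute)
    then show ?thesis unfolding u_def using a_pos kk by (simp add: inner_diff_left)
  qed
  have FTx: "transpose F *v y = y + (k \<bullet> y) *\<^sub>R u" for y
  proof -
    have "z \<bullet> (transpose F *v y) = z \<bullet> (y + (k \<bullet> y) *\<^sub>R u)" for z
    proof -
      have "z \<bullet> (transpose F *v y) = (F *v z) \<bullet> y"
        by (simp only: inner_mv_transpose transpose_transpose)
      also have "\<dots> = z \<bullet> (y + (k \<bullet> y) *\<^sub>R u)"
        by (simp add: Fx inner_add_left inner_add_right inner_commute)
      finally show ?thesis .
    qed
    then show ?thesis
      by (simp add: vec_eq_iff cart_eq_inner_axis inner_commute)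
  qed
  have detF: "det F = 1 / sqrt a"
  proof -
    have "det F = 1 + u $ \<kappa>"
      unfolding F_def kax matrix_rank1 by (rule det_rowk)
    also have "u $ \<kappa> = u \<bullet> k" by (simp add: kax cart_eq_inner_axis)
    finally show ?thesis using uk by simp
  qed
  define S' where "S' = transpose F ** S ** F"
  have S'x: "x \<bullet> (S' *v y) = (F *v x) \<bullet> (S *v (F *v y))" for x y
  proof -
    have "S' *v y = transpose F *v (S *v (F *v y))"
      unfolding S'_def by (simp only: matrix_vector_mul_assoc matrix_mul_assoc)
    then show ?thesis
      by (simp only: inner_mv_transpose transpose_transpose)
  qed
  have symS': "transpose S' = S'"
    unfolding S'_def using symS by (simp add: matrix_transpose_mul matrix_mul_assoc)
  have detS': "det S' = det S / a"
    unfolding S'_def using a_pos by (simp add: det_mul detF power2_eq_square[symmetric] )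
  have Finj: "F *v x = 0 \<Longrightarrow> x = 0" for x
  proof -
    assume "F *v x = 0"
    then have x: "x = - (u \<bullet> x) *\<^sub>R k" unfolding Fx by (simp add: eq_neg_iff_add_eq_0)
    then have "u \<bullet> x = - (u \<bullet> x) * (u \<bullet> k)" by (metis inner_scaleR_right)
    then have "(u \<bullet> x) * (1/sqrt a) = 0" using uk by (simp add: algebra_simps)
    then have "u \<bullet> x = 0" using a_pos by simp
    then show "x = 0" using x by simp
  qed
  have pdS': "\<forall>x. x \<noteq> 0 \<longrightarrow> 0 < x \<bullet> (S' *v x)"
    using pdS Finj by (auto simp: S'x)
  have outS': "\<forall>b\<in>Basis - I. S' *v b = b"
  proof
    fix b assume b: "b \<in> Basis - I"
    show "S' *v b = b"
    proof (cases "b = k")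
      case True
      have "F *v k = (1 + u \<bullet> k) *\<^sub>R k" by (simp add: Fx scaleR_add_left)
      then have "F *v k = (1/sqrt a) *\<^sub>R k" using uk by simp
      then have "S' *v k = (1/sqrt a) *\<^sub>R (transpose F *v (S *v k))"
        unfolding S'_def by (simp add: matrix_vector_mul_assoc[symmetric] matrix_mul_assoc mv_scaleR)
      also have "transpose F *v (S *v k) = sqrt a *\<^sub>R k"
        using a_pos unfolding FTx u_def a_def[symmetric]
        by (simp add: algebra_simps real_sqrt_divide)
        (metis real_div_sqrt less_imp_le)
      finally show ?thesis using True a_pos by simp
    next
      case False
      then have bo: "b \<in> Basis - insert k I" using b by auto
      have Sb: "S *v b = b" using outS bo by auto
      have ub: "u \<bullet> b = 0"
      proof -
        have "(S *v k) \<bullet> b = k \<bullet> (S *v b)" using sym_inner[OF symS] by (simp add: inner_commute)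
        then show ?thesis using False kB bo Sb
          by (simp add: u_def inner_diff_left inner_Basis)
      qed
      have kb: "k \<bullet> b = 0" using False kB bo by (simp add: inner_Basis)
      show ?thesis unfolding S'_def
        by (simp add: matrix_vector_mul_assoc[symmetric] Fx ub Sb FTx kb)
    qed
  qed
  from insert.IH[OF IB symS' pdS' outS']
  have IH1: "0 < det S'" and
    IH2: "(\<integral>\<^sup>+f. ennreal (exp (-(1/2) * (vI I f \<bullet> (S' *v vI I f)))) \<partial>(PiM I (\<lambda>_. lborel)))
          = ennreal (sqrt ((2*pi)^card I / det S'))" by auto
  have detS: "det S = a * det S'" using detS' a_pos by simp
  show ?case
  proof
    show "0 < det S" using detS a_pos IH1 by simp
    show "(\<integral>\<^sup>+f. ennreal (exp (-(1/2) * (vI (insert k I) f \<bullet> (S *v vI (insert k I) f)))) \<partial>(PiM (insert k I) (\<lambda>_. lborel)))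
          = ennreal (sqrt ((2*pi)^card (insert k I) / det S))"
    proof -
      interpret product_sigma_finite "\<lambda>_::real^'d. lborel :: real measure" by (rule psf_lborel)
      have mv: "vI (insert k I) \<in> borel_measurable (PiM (insert k I) (\<lambda>_. lborel))"
        by (rule meas_vI) (simp add: insert.hyps)
      have mG: "(\<lambda>v. ennreal (exp (-(1/2) * (v \<bullet> (S *v v))))) \<in> borel_measurable borel"
        by measurable
      have meas: "(\<lambda>f. ennreal (exp (-(1/2) * (vI (insert k I) f \<bullet> (S *v vI (insert k I) f)))))
          \<in> borel_measurable (PiM (insert k I) (\<lambda>_. lborel))"
        using measurable_compose[OF mv mG] by (simp add: o_def)
      have vins: "vI (insert k I) (x(k:=y)) = y *\<^sub>R k + vI I x" for x y
      proof -
        have "(\<Sum>b\<in>I. (x(k:=y)) b *\<^sub>R b) = (\<Sum>b\<in>I. x b *\<^sub>R b)"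
          using insert.hyps by (intro sum.cong) auto
        then show ?thesis unfolding vI_def using insert.hyps by simp
      qed
      have inner: "(\<integral>\<^sup>+y. ennreal (exp (-(1/2) * ((y *\<^sub>R k + w) \<bullet> (S *v (y *\<^sub>R k + w))))) \<partial>lborel)
          = ennreal (sqrt (2*pi/a)) * ennreal (exp (-(1/2) * (w \<bullet> (S' *v w))))"
        if kw: "k \<bullet> w = 0" for w
      proof -
        define \<beta> where "\<beta> = k \<bullet> (S *v w)"
        have e1: "(y *\<^sub>R k + w) \<bullet> (S *v (y *\<^sub>R k + w)) = a*y^2 + 2*\<beta>*y + w \<bullet> (S *v w)" for y
          unfolding quad_add[OF symS] quad_scale \<beta>_def a_def
          by (simp add: mv_scaleR algebra_simps)
        have uw: "u \<bullet> w = - (\<beta>/a)"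
        proof -
          have "(S *v k) \<bullet> w = \<beta>" unfolding \<beta>_def using sym_inner[OF symS, of w k] by (simp add: inner_commute)
          moreover have "w \<bullet> k = 0" using kw by (simp add: inner_commute)
          ultimately have "w \<bullet> u = - (\<beta>/a)" unfolding u_def
            by (simp add: inner_diff_right inner_commute[of w "S *v k"])
          then show ?thesis by (simp add: inner_commute)
        qed
        have e2: "w \<bullet> (S' *v w) = w \<bullet> (S *v w) - \<beta>^2/a"
        proof -
          have "w \<bullet> (S' *v w) = (w + (u \<bullet> w) *\<^sub>R k) \<bullet> (S *v (w + (u \<bullet> w) *\<^sub>R k))"
            by (simp add: S'x Fx)
          also have "\<dots> = w \<bullet> (S *v w) + 2 * (u \<bullet> w) * \<beta> + (u \<bullet> w)^2 * a"
            unfolding quad_add[OF symS] quad_scale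
            using sym_inner[OF symS, of w k]
            by (simp add: mv_scaleR \<beta>_def a_def inner_commute)
          also have "\<dots> = w \<bullet> (S *v w) - \<beta>^2/a"
            unfolding uw using a_pos by (simp add: field_simps power2_eq_square)
          finally show ?thesis .
        qed
        show ?thesis
          unfolding e1 one_dim_gauss[OF a_pos] e2
          using a_pos by (simp add: ennreal_mult[symmetric])
      qed
      have "(\<integral>\<^sup>+f. ennreal (exp (-(1/2) * (vI (insert k I) f \<bullet> (S *v vI (insert k I) f)))) \<partial>(PiM (insert k I) (\<lambda>_. lborel)))
          = (\<integral>\<^sup>+x. (\<integral>\<^sup>+y. ennreal (exp (-(1/2) * (vI (insert k I) (x(k:=y)) \<bullet> (S *v vI (insert k I) (x(k:=y)))))) \<partial>lborel) \<partial>(PiM I (\<lambda>_. lborel)))"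
        by (rule product_nn_integral_insert[OF insert.hyps meas])
      also have "\<dots> = (\<integral>\<^sup>+x. ennreal (sqrt (2*pi/a)) * ennreal (exp (-(1/2) * (vI I x \<bullet> (S' *v vI I x)))) \<partial>(PiM I (\<lambda>_. lborel)))"
        unfolding vins
        by (intro nn_integral_cong inner inner_vI_out[OF IB kB insert.hyps(2)])
      also have "\<dots> = ennreal (sqrt (2*pi/a)) * ennreal (sqrt ((2*pi)^card I / det S'))"
      proof -
        have mI: "(\<lambda>x. ennreal (exp (-(1/2) * (vI I x \<bullet> (S' *v vI I x))))) \<in> borel_measurable (PiM I (\<lambda>_. lborel))"
          by (rule measurable_compose[OF meas_vI[OF insert.hyps(1)]]) measurable
        show ?thesis by (subst nn_integral_cmult[OF mI]) (simp only: IH2)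
      qed
      also have "\<dots> = ennreal (sqrt ((2*pi)^card (insert k I) / det S))"
        using a_pos IH1 insert.hyps
        by (simp add: ennreal_mult[symmetric] real_sqrt_mult[symmetric] detS field_simps)
      finally show ?thesis .
    qed
  qed
qed



definition spd :: "real^'d^'d \<Rightarrow> bool" where
  "spd S \<longleftrightarrow> transpose S = S \<and> (\<forall>x. x \<noteq> 0 \<longrightarrow> 0 < x \<bullet> (S *v x))"

lemma spd_det_pos: "spd S \<Longrightarrow> 0 < det S"
  using gn_aux[of "Basis" S] unfolding spd_def by auto

lemma gauss_quad_integral0:
  fixes S :: "real^'d^'d"
  assumes "spd S"
  shows "(\<integral>\<^sup>+x. ennreal (exp (-(1/2) * (x \<bullet> (S *v x)))) \<partial>lborel)
       = ennreal (sqrt ((2*pi)^CARD('d) / det S))"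
proof -
  have mG: "(\<lambda>v. ennreal (exp (-(1/2) * (v \<bullet> (S *v v))))) \<in> borel_measurable borel"
    by measurable
  have "(\<integral>\<^sup>+x. ennreal (exp (-(1/2) * (x \<bullet> (S *v x)))) \<partial>lborel)
      = (\<integral>\<^sup>+f. ennreal (exp (-(1/2) * (vI Basis f \<bullet> (S *v vI Basis f)))) \<partial>(PiM Basis (\<lambda>_. lborel)))"
    apply (subst lborel_eq)
    apply (subst nn_integral_distr)
      apply (simp add: vI_def[symmetric] meas_vI)
     apply (simp add: mG)
    apply (simp add: vI_def)
    done
  also have "\<dots> = ennreal (sqrt ((2*pi)^CARD('d) / det S))"
    using gn_aux[of "Basis" S] assms unfolding spd_def by auto
  finally show ?thesis .
qed

lemma nn_integral_translate:
  fixes g :: "real^'d \<Rightarrow> ennreal"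
  assumes [measurable]: "g \<in> borel_measurable borel"
  shows "(\<integral>\<^sup>+x. g (x - mu) \<partial>lborel) = (\<integral>\<^sup>+x. g x \<partial>lborel)"
proof -
  have "(\<integral>\<^sup>+x. g (x - mu) \<partial>lborel) = (\<integral>\<^sup>+x. g (x - mu) \<partial>(distr lborel borel ((+) mu)))"
    by (simp add: lborel_distr_plus)
  also have "\<dots> = (\<integral>\<^sup>+x. g x \<partial>lborel)"
    by (subst nn_integral_distr) auto
  finally show ?thesis .
qed

lemma gauss_quad_integral:
  fixes S :: "real^'d^'d"
  assumes "spd S"
  shows "(\<integral>\<^sup>+x. ennreal (exp (-(1/2) * ((x - mu) \<bullet> (S *v (x - mu))))) \<partial>lborel)
       = ennreal (sqrt ((2*pi)^CARD('d) / det S))"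
proof -
  have mG: "(\<lambda>v. ennreal (exp (-(1/2) * (v \<bullet> (S *v v))))) \<in> borel_measurable borel"
    by measurable
  show ?thesis
    using nn_integral_translate[OF mG, of mu] gauss_quad_integral0[OF assms] by simp
qed

lemma invertible_matrix_inv:
  fixes A :: "real^'n^'n"
  assumes "invertible A"
  shows "A ** matrix_inv A = mat 1" "matrix_inv A ** A = mat 1"
proof -
  from assms obtain B where "A ** B = mat 1 \<and> B ** A = mat 1" unfolding invertible_def by blast
  then have "A ** matrix_inv A = mat 1 \<and> matrix_inv A ** A = mat 1"
    unfolding matrix_inv_def by (rule someI)
  then show "A ** matrix_inv A = mat 1" "matrix_inv A ** A = mat 1" by auto
qed

lemma matrix_inv_unique:
  fixes A B :: "real^'n^'n"
  assumes "A ** B = mat 1"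
  shows "matrix_inv A = B"
proof -
  have BA: "B ** A = mat 1" using assms matrix_left_right_inverse by blast
  then have inv: "invertible A" unfolding invertible_def using assms by blast
  have "matrix_inv A = matrix_inv A ** (A ** B)" using assms by simp
  also have "\<dots> = B" by (simp add: matrix_mul_assoc invertible_matrix_inv(2)[OF inv])
  finally show ?thesis .
qed

lemma spd_invertible: "spd S \<Longrightarrow> invertible S"
  using spd_det_pos invertible_det_nz by force

lemma spd_inv:
  fixes S :: "real^'d^'d"
  assumes "spd S"
  shows "spd (matrix_inv S)" "det (matrix_inv S) = 1 / det S"
proof -
  have inv: "invertible S" using spd_invertible[OF assms] .
  note I1 = invertible_matrix_inv[OF inv]
  have sym: "transpose S = S" using assms unfolding spd_def by auto
  have "det S * det (matrix_inv S) = 1"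
    using I1(1) by (metis det_I det_mul)
  then show "det (matrix_inv S) = 1 / det S"
    using spd_det_pos[OF assms] by (simp add: field_simps)
  have "S ** transpose (matrix_inv S) = mat 1"
    using I1(2) by (metis matrix_transpose_mul sym transpose_mat)
  then have T: "transpose (matrix_inv S) = matrix_inv S"
    using matrix_inv_unique by metis
  have P: "0 < x \<bullet> (matrix_inv S *v x)" if "x \<noteq> 0" for x
  proof -
    define y where "y = matrix_inv S *v x"
    have xy: "x = S *v y" unfolding y_def by (simp add: matrix_vector_mul_assoc I1(1))
    then have "y \<noteq> 0" using that by auto
    then have "0 < y \<bullet> (S *v y)" using assms unfolding spd_def by auto
    then show ?thesis unfolding y_def[symmetric] by (simp add: xy inner_commute)
  qed
  show "spd (matrix_inv S)" unfolding spd_def using T P by auto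
qed

lemma matrix_inv_inv:
  fixes S :: "real^'d^'d"
  assumes "invertible S"
  shows "matrix_inv (matrix_inv S) = S"
  by (rule matrix_inv_unique) (rule invertible_matrix_inv(2)[OF assms])

lemma gauss_pdf_nonneg: "spd S \<Longrightarrow> 0 \<le> gauss_pdf mu S x"
  unfolding gauss_pdf_def using spd_det_pos[of S] by simp

lemma gauss_pdf_pos: "spd S \<Longrightarrow> 0 < gauss_pdf mu S x"
  unfolding gauss_pdf_def using spd_det_pos[of S] by simp

lemma gauss_pdf_meas[measurable]: "gauss_pdf mu S \<in> borel_measurable borel"
  unfolding gauss_pdf_def[abs_def] by measurable

lemma gauss_pdf_integral:
  fixes S :: "real^'d^'d"
  assumes "spd S"
  shows "(\<integral>\<^sup>+x. ennreal (gauss_pdf mu S x) \<partial>lborel) = 1"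
proof -
  have Si: "spd (matrix_inv S)" and dSi: "det (matrix_inv S) = 1 / det S"
    using spd_inv[OF assms] by auto
  have dpos: "0 < det S" using spd_det_pos[OF assms] .
  define K where "K = sqrt ((2 * pi) ^ CARD('d) * det S)"
  have Kpos: "K > 0" unfolding K_def using dpos by simp
  have "(\<integral>\<^sup>+x. ennreal (gauss_pdf mu S x) \<partial>lborel)
      = (\<integral>\<^sup>+x. ennreal (1/K) * ennreal (exp (-(1/2) * ((x - mu) \<bullet> (matrix_inv S *v (x - mu))))) \<partial>lborel)"
    unfolding gauss_pdf_def K_def[symmetric]
    by (rule nn_integral_cong) (use Kpos in \<open>simp add: ennreal_mult[symmetric]\<close>)
  also have "\<dots> = ennreal (1/K) * ennreal (sqrt ((2*pi)^CARD('d) / det (matrix_inv S)))"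
  proof -
    have m: "(\<lambda>x. ennreal (exp (-(1/2) * ((x - mu) \<bullet> (matrix_inv S *v (x - mu)))))) \<in> borel_measurable lborel"
      by measurable
    show ?thesis by (simp only: nn_integral_cmult[OF m] gauss_quad_integral[OF Si])
  qed
  also have "\<dots> = 1"
    unfolding dSi K_def using dpos by (simp add: ennreal_mult[symmetric] real_sqrt_mult)
  finally show ?thesis .
qed

lemma prob_space_normal_measure:
  assumes "spd S"
  shows "prob_space (normal_measure mu S)"
  unfolding normal_measure_def
  by (rule prob_spaceI) (simp add: emeasure_density gauss_pdf_integral[OF assms])



lemma mv_add: "((A::real^'n^'m) + B) *v x = A *v x + B *v x"
  by (simp add: vec_eq_iff matrix_vector_mult_def sum.distrib algebra_simps)
lemma mv_diff: "((A::real^'n^'m) - B) *v x = A *v x - B *v x"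
  by (simp add: vec_eq_iff matrix_vector_mult_def sum_subtractf algebra_simps)
lemma mv_smat: "((c::real) *\<^sub>R (A::real^'n^'m)) *v x = c *\<^sub>R (A *v x)"
  by (simp add: vec_eq_iff matrix_vector_mult_def sum_distrib_left algebra_simps)
lemma mv_radd: "(A::real^'n^'m) *v (x + y) = A *v x + A *v y"
  by (simp add: matrix_vector_right_distrib)
lemma mv_rdiff: "(A::real^'n^'m) *v (x - y) = A *v x - A *v y"
  using linear_diff[OF matrix_vector_mul_linear[of A]] by simp
lemma mv_rneg: "(A::real^'n^'m) *v (- x) = - (A *v x)"
  using linear_neg[OF matrix_vector_mul_linear[of A]] by simp

lemmas mvs = mv_add mv_diff mv_smat mv_radd mv_rdiff mv_scaleR mv_rneg matrix_vector_mul_assoc[symmetric]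
  matrix_vector_mul_lid

lemma inner_eq_imp: fixes a b :: "'a::real_inner" shows "(\<And>x. x \<bullet> a = x \<bullet> b) \<Longrightarrow> a = b"
  by (metis inner_diff_right inner_eq_zero_iff right_minus_eq)

lemma sym_from_inner:
  fixes S :: "real^'d^'d"
  assumes "\<And>x y. x \<bullet> (S *v y) = y \<bullet> (S *v x)"
  shows "transpose S = S"
proof -
  have "transpose S *v y = S *v y" for y
  proof (rule inner_eq_imp)
    fix x
    have "x \<bullet> (transpose S *v y) = (S *v x) \<bullet> y"
      by (simp only: inner_mv_transpose transpose_transpose)
    also have "\<dots> = x \<bullet> (S *v y)" using assms[of y x] by (simp add: inner_commute)
    finally show "x \<bullet> (transpose S *v y) = x \<bullet> (S *v y)" .
  qed
  then show ?thesis by (simp add: matrix_eq)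
qed

lemma inner_AT: "x \<bullet> (transpose A *v y) = ((A::real^'n^'m) *v x) \<bullet> y"
  by (simp only: inner_mv_transpose transpose_transpose)

definition prec :: "real^'n^'m \<Rightarrow> real \<Rightarrow> real \<Rightarrow> real^'n^'n" where
  "prec A sg t = (1 / t\<^sup>2) *\<^sub>R mat 1 + (1 / sg\<^sup>2) *\<^sub>R (transpose A ** A)"

lemma post_cov_prec: "post_cov A sg t = matrix_inv (prec A sg t)"
  unfolding post_cov_def prec_def ..

lemma marg_mv: "marg_cov A sg t *v z = sg\<^sup>2 *\<^sub>R z + t\<^sup>2 *\<^sub>R (A *v (transpose A *v z))"
  unfolding marg_cov_def by (simp add: mvs)

lemma prec_mv: "prec A sg t *v z = (1/t\<^sup>2) *\<^sub>R z + (1/sg\<^sup>2) *\<^sub>R (transpose A *v (A *v z))"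
  unfolding prec_def by (simp add: mvs)

lemma spd_marg:
  assumes "sg > 0"
  shows "spd (marg_cov A sg t)"
proof -
  have q2: "x \<bullet> (marg_cov A sg t *v y) = sg\<^sup>2 * (x \<bullet> y) + t\<^sup>2 * ((transpose A *v x) \<bullet> (transpose A *v y))" for x y
    by (simp only: marg_mv inner_add_right inner_scaleR_right inner_mv_transpose[of x A])
  have q: "x \<bullet> (marg_cov A sg t *v x) = sg\<^sup>2 * (x \<bullet> x) + t\<^sup>2 * ((transpose A *v x) \<bullet> (transpose A *v x))" for x
    by (rule q2)
  have s: "x \<bullet> (marg_cov A sg t *v y) = y \<bullet> (marg_cov A sg t *v x)" for x y
    by (simp only: q2) (simp add: inner_commute)
  have "0 < x \<bullet> (marg_cov A sg t *v x)" if "x \<noteq> 0" for x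
  proof -
    have "0 < sg\<^sup>2 * (x \<bullet> x)" using assms that by simp
    moreover have "0 \<le> t\<^sup>2 * ((transpose A *v x) \<bullet> (transpose A *v x))" by simp
    ultimately show ?thesis unfolding q by linarith
  qed
  then show ?thesis unfolding spd_def using sym_from_inner[OF s] by auto
qed

lemma spd_prec:
  assumes "sg > 0" "t > 0"
  shows "spd (prec A sg t)"
proof -
  have q2: "x \<bullet> (prec A sg t *v y) = (1/t\<^sup>2) * (x \<bullet> y) + (1/sg\<^sup>2) * ((A *v x) \<bullet> (A *v y))" for x y
    by (simp only: prec_mv inner_add_right inner_scaleR_right inner_AT)
  have q: "x \<bullet> (prec A sg t *v x) = (1/t\<^sup>2) * (x \<bullet> x) + (1/sg\<^sup>2) * ((A *v x) \<bullet> (A *v x))" for x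
    by (rule q2)
  have s: "x \<bullet> (prec A sg t *v y) = y \<bullet> (prec A sg t *v x)" for x y
    by (simp only: q2) (simp add: inner_commute)
  have "0 < x \<bullet> (prec A sg t *v x)" if "x \<noteq> 0" for x
  proof -
    have "0 < (1/t\<^sup>2) * (x \<bullet> x)" using assms that by simp
    moreover have "0 \<le> (1/sg\<^sup>2) * ((A *v x) \<bullet> (A *v x))" by simp
    ultimately show ?thesis unfolding q by linarith
  qed
  then show ?thesis unfolding spd_def using sym_from_inner[OF s] by auto
qed

lemma woodbury:
  fixes A :: "real^'n^'m"
  assumes sg: "sg > 0" and t: "t > 0"
  shows "matrix_inv (marg_cov A sg t) *v z
      = (1/sg\<^sup>2) *\<^sub>R z - (1/sg^4) *\<^sub>R (A *v (matrix_inv (prec A sg t) *v (transpose A *v z)))"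
proof -
  define P :: "real^'n^'n" where "P = prec A sg t"
  define W :: "real^'m^'m" where "W = (1/sg\<^sup>2) *\<^sub>R mat 1 - (1/sg^4) *\<^sub>R (A ** matrix_inv P ** transpose A)"
  have invP: "invertible P" unfolding P_def by (rule spd_invertible[OF spd_prec[OF sg t]])
  have PP: "P *v (matrix_inv P *v u) = u" for u
    using invertible_matrix_inv(1)[OF invP] by (simp add: matrix_vector_mul_assoc)
  have "(marg_cov A sg t ** W) *v z = z" for z
  proof -
    define u where "u = transpose A *v z"
    define p where "p = matrix_inv P *v u"
    have Pp: "(1/t\<^sup>2) *\<^sub>R p + (1/sg\<^sup>2) *\<^sub>R (transpose A *v (A *v p)) = u"
      using PP[of u] unfolding p_def P_def prec_mv .
    have h1: "(1/sg\<^sup>2) *\<^sub>R (transpose A *v (A *v p)) = u - (1/t\<^sup>2) *\<^sub>R p"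
      using Pp by (metis add_diff_cancel_left')
    have ATAp: "transpose A *v (A *v p) = sg\<^sup>2 *\<^sub>R u - (sg\<^sup>2/t\<^sup>2) *\<^sub>R p"
    proof -
      have "transpose A *v (A *v p) = sg\<^sup>2 *\<^sub>R ((1/sg\<^sup>2) *\<^sub>R (transpose A *v (A *v p)))"
        using sg by simp
      also have "\<dots> = sg\<^sup>2 *\<^sub>R u - (sg\<^sup>2/t\<^sup>2) *\<^sub>R p" unfolding h1 by (simp add: scaleR_diff_right)
      finally show ?thesis .
    qed
    have Wz: "W *v z = (1/sg\<^sup>2) *\<^sub>R z - (1/sg^4) *\<^sub>R (A *v p)"
      unfolding W_def p_def u_def by (simp add: mvs)
    have "(marg_cov A sg t ** W) *v z = sg\<^sup>2 *\<^sub>R (W *v z) + t\<^sup>2 *\<^sub>R (A *v (transpose A *v (W *v z)))"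
      by (simp add: matrix_vector_mul_assoc[symmetric] marg_mv)
    also have "\<dots> = z"
      unfolding Wz
      apply (simp add: mvs ATAp u_def[symmetric] vec_eq_iff)
      using sg t apply (simp add: field_simps)
      done
    finally show ?thesis .
  qed
  then have "marg_cov A sg t ** W = mat 1" by (simp add: matrix_eq)
  then have "matrix_inv (marg_cov A sg t) = W" by (rule matrix_inv_unique)
  then show ?thesis unfolding W_def P_def by (simp add: mvs)
qed



lemma prec_inner: "x \<bullet> (prec A sg t *v y) = (1/t\<^sup>2) * (x \<bullet> y) + (1/sg\<^sup>2) * ((A *v x) \<bullet> (A *v y))"
  by (simp only: prec_mv inner_add_right inner_scaleR_right inner_AT)

lemma quad_identity:
  fixes A :: "real^'n^'m" and mu x :: "real^'n" and y :: "real^'m"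
  assumes sg: "sg > 0" and t: "t > 0"
  shows "(1/t\<^sup>2) * ((x - mu) \<bullet> (x - mu)) + (1/sg\<^sup>2) * ((y - A *v x) \<bullet> (y - A *v x))
       = (y - A *v mu) \<bullet> (matrix_inv (marg_cov A sg t) *v (y - A *v mu))
         + (x - post_mean A sg mu t y) \<bullet> (prec A sg t *v (x - post_mean A sg mu t y))"
proof -
  define P where "P = prec A sg t"
  define Pi where "Pi = matrix_inv P"
  define r where "r = y - A *v mu"
  define d where "d = x - mu"
  define g where "g = transpose A *v r"
  define h where "h = Pi *v g"
  define v where "v = (1/sg\<^sup>2) *\<^sub>R h"
  have spdP: "spd P" unfolding P_def by (rule spd_prec[OF sg t])
  have symP: "transpose P = P" using spdP unfolding spd_def by auto
  have invP: "invertible P" by (rule spd_invertible[OF spdP])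
  have PiP: "Pi *v (P *v z) = z" for z
    unfolding Pi_def using invertible_matrix_inv(2)[OF invP] by (simp add: matrix_vector_mul_assoc)
  have PPi: "P *v (Pi *v z) = z" for z
    unfolding Pi_def using invertible_matrix_inv(1)[OF invP] by (simp add: matrix_vector_mul_assoc)
  have m_eq: "post_mean A sg mu t y = mu + v"
  proof -
    have "(1 / t\<^sup>2) *\<^sub>R mu + (1 / sg\<^sup>2) *\<^sub>R (transpose A *v y) = P *v mu + (1/sg\<^sup>2) *\<^sub>R g"
      unfolding P_def prec_mv g_def r_def by (simp add: mvs algebra_simps)
    then have "post_mean A sg mu t y = Pi *v (P *v mu + (1/sg\<^sup>2) *\<^sub>R g)"
      unfolding post_mean_def post_cov_prec P_def[symmetric] Pi_def[symmetric] by simp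
    also have "\<dots> = mu + v" unfolding v_def h_def by (simp add: mvs PiP)
    finally show ?thesis .
  qed
  have e_m: "x - post_mean A sg mu t y = d - v" unfolding m_eq d_def by simp
  have e_yAx: "y - A *v x = r - A *v d" unfolding r_def d_def by (simp add: mvs)
  have e_lhs: "(r - A *v d) \<bullet> (r - A *v d) = r \<bullet> r - 2 * ((A *v d) \<bullet> r) + (A *v d) \<bullet> (A *v d)"
    by (simp add: inner_diff_left inner_diff_right inner_commute)
  have e_Pv: "P *v v = (1/sg\<^sup>2) *\<^sub>R g" unfolding v_def h_def by (simp add: mvs PPi)
  have e_quad: "(d - v) \<bullet> (P *v (d - v)) = d \<bullet> (P *v d) - 2 * (d \<bullet> (P *v v)) + v \<bullet> (P *v v)"
    using sym_inner[OF symP, of d v]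
    by (simp add: mvs inner_diff_left inner_diff_right)
  have e_dPd: "d \<bullet> (P *v d) = (1/t\<^sup>2) * (d \<bullet> d) + (1/sg\<^sup>2) * ((A *v d) \<bullet> (A *v d))"
    unfolding P_def by (rule prec_inner)
  have e_dPv: "d \<bullet> (P *v v) = (1/sg\<^sup>2) * ((A *v d) \<bullet> r)"
    unfolding e_Pv g_def by (simp only: inner_scaleR_right inner_AT)
  have e_vPv: "v \<bullet> (P *v v) = (1/sg^4) * (h \<bullet> g)"
    by (simp only: e_Pv) (simp add: v_def power4_eq_xxxx power2_eq_square)
  have e_sig: "r \<bullet> (matrix_inv (marg_cov A sg t) *v r) = (1/sg\<^sup>2) * (r \<bullet> r) - (1/sg^4) * (g \<bullet> h)"
  proof -
    have "r \<bullet> (A *v h) = g \<bullet> h" unfolding g_def by (rule inner_mv_transpose)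
    then show ?thesis
      unfolding woodbury[OF sg t] P_def[symmetric] Pi_def[symmetric] g_def[symmetric] h_def[symmetric]
      by (simp add: inner_diff_right)
  qed
  show ?thesis
    unfolding e_m e_yAx P_def[symmetric] r_def[symmetric] d_def[symmetric] e_lhs e_quad e_dPd e_dPv e_vPv e_sig
    by (simp add: inner_commute[of h g] algebra_simps)
qed



lemma spd_scaled_id: "c > 0 \<Longrightarrow> spd (c *\<^sub>R mat 1 :: real^'d^'d)"
  unfolding spd_def
  by (auto simp: mvs intro!: sym_from_inner simp: inner_commute)

lemma matrix_inv_scaled_id: "c \<noteq> 0 \<Longrightarrow> matrix_inv (c *\<^sub>R mat 1 :: real^'d^'d) = (1/c) *\<^sub>R mat 1"
  by (rule matrix_inv_unique) (simp add: matrix_eq mvs)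

lemma det_scaled_id: "det (c *\<^sub>R mat 1 :: real^'d^'d) = c ^ CARD('d)"
  by (subst det_diagonal) (auto simp: mat_def)

lemma meas_mv_gen: "(\<lambda>v. (A::real^'n^'m) *v v) \<in> borel_measurable borel"
  by (intro borel_measurable_continuous_onI linear_continuous_on)
     (simp add: linear_linear matrix_vector_mul_linear)

lemma meas_mv_comp[measurable]:
  "f \<in> borel_measurable M \<Longrightarrow> (\<lambda>x. (A::real^'n^'m) *v f x) \<in> borel_measurable M"
  using measurable_compose[OF _ meas_mv_gen] by blast

lemma pair_lborel: "pair_sigma_finite (lborel::(real^'a) measure) (lborel::(real^'b) measure)"
  by (simp add: pair_sigma_finite_def sigma_finite_lborel)

lemma conjugacy:
  fixes A :: "real^'n^'m" and mu x :: "real^'n" and y :: "real^'m"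
  assumes sg: "sg > 0" and t: "t > 0"
  shows "gauss_pdf mu (t\<^sup>2 *\<^sub>R mat 1) x * gauss_pdf (A *v x) (sg\<^sup>2 *\<^sub>R mat 1) y
       = gauss_pdf (A *v mu) (marg_cov A sg t) y * gauss_pdf (post_mean A sg mu t y) (post_cov A sg t) x"
proof -
  define P where "P = prec A sg t"
  define Sg where "Sg = marg_cov A sg t"
  have spdP: "spd P" unfolding P_def by (rule spd_prec[OF sg t])
  have spdS: "spd Sg" unfolding Sg_def by (rule spd_marg[OF sg])
  have spdPi: "spd (matrix_inv P)" and dPi: "det (matrix_inv P) = 1 / det P" using spd_inv[OF spdP] by auto
  have Pii: "matrix_inv (matrix_inv P) = P" by (rule matrix_inv_inv[OF spd_invertible[OF spdP]])
  have dP: "det P > 0" by (rule spd_det_pos[OF spdP])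
  have dS: "det Sg > 0" by (rule spd_det_pos[OF spdS])
  define K1 where "K1 = 1 / (sqrt ((2*pi)^CARD('n) * (t\<^sup>2)^CARD('n)) * sqrt ((2*pi)^CARD('m) * (sg\<^sup>2)^CARD('m)))"
  define K2 where "K2 = 1 / (sqrt ((2*pi)^CARD('m) * det Sg) * sqrt ((2*pi)^CARD('n) * det (matrix_inv P)))"
  have K1pos: "K1 > 0" unfolding K1_def using sg t by simp
  have K2pos: "K2 > 0" unfolding K2_def using dS dP dPi by simp
  define Qs where "Qs y = (y - A *v mu) \<bullet> (matrix_inv Sg *v (y - A *v mu))" for y
  define m where "m y = post_mean A sg mu t y" for y
  define Qp where "Qp x y = (x - m y) \<bullet> (P *v (x - m y))" for x y
  define E where "E x y = exp (-(1/2) * (Qs y + Qp x y))" for x y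
  have L: "gauss_pdf mu (t\<^sup>2 *\<^sub>R mat 1) x * gauss_pdf (A *v x) (sg\<^sup>2 *\<^sub>R mat 1) y = K1 * E x y" for x y
  proof -
    have "gauss_pdf mu (t\<^sup>2 *\<^sub>R mat 1) x * gauss_pdf (A *v x) (sg\<^sup>2 *\<^sub>R mat 1) y
        = K1 * (exp (-(1/2) * ((1/t\<^sup>2) * ((x - mu) \<bullet> (x - mu)))) * exp (-(1/2) * ((1/sg\<^sup>2) * ((y - A *v x) \<bullet> (y - A *v x)))))"
    proof -
      have i1: "matrix_inv (t\<^sup>2 *\<^sub>R mat 1) *v (x - mu) = (1/t\<^sup>2) *\<^sub>R (x - mu)"
        using t by (simp add: matrix_inv_scaled_id mv_smat)
      have i2: "matrix_inv (sg\<^sup>2 *\<^sub>R mat 1) *v (y - A *v x) = (1/sg\<^sup>2) *\<^sub>R (y - A *v x)"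
        using sg by (simp add: matrix_inv_scaled_id mv_smat)
      show ?thesis
        unfolding gauss_pdf_def i1 i2 det_scaled_id inner_scaleR_right K1_def
        by simp
    qed
    also have "\<dots> = K1 * E x y"
      unfolding E_def Qs_def Qp_def m_def Sg_def P_def
      by (simp only: exp_add[symmetric] quad_identity[OF sg t, symmetric]) (simp add: algebra_simps)
    finally show ?thesis .
  qed
  have R: "gauss_pdf (A *v mu) Sg y * gauss_pdf (m y) (matrix_inv P) x = K2 * E x y" for x y
    unfolding gauss_pdf_def K2_def E_def Qs_def Qp_def Pii
    by (simp add: exp_add[symmetric] algebra_simps)
  define c where "c = K1 / K2"
  have LR: "gauss_pdf mu (t\<^sup>2 *\<^sub>R mat 1) x * gauss_pdf (A *v x) (sg\<^sup>2 *\<^sub>R mat 1) y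
      = c * (gauss_pdf (A *v mu) Sg y * gauss_pdf (m y) (matrix_inv P) x)" for x y
    unfolding L R c_def using K2pos by simp
  have c1: "c = 1"
  proof -
    interpret pair_sigma_finite "lborel::(real^'n) measure" "lborel::(real^'m) measure"
      by (rule pair_lborel)
    have meas: "(\<lambda>(x, y). ennreal (gauss_pdf mu (t\<^sup>2 *\<^sub>R mat 1) x * gauss_pdf (A *v x) (sg\<^sup>2 *\<^sub>R mat 1) y))
        \<in> borel_measurable (lborel \<Otimes>\<^sub>M lborel)"
      unfolding gauss_pdf_def by measurable
    have I1: "(\<integral>\<^sup>+x. (\<integral>\<^sup>+y. ennreal (gauss_pdf mu (t\<^sup>2 *\<^sub>R mat 1) x * gauss_pdf (A *v x) (sg\<^sup>2 *\<^sub>R mat 1) y) \<partial>lborel) \<partial>lborel) = 1"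
    proof -
      have "(\<integral>\<^sup>+x. (\<integral>\<^sup>+y. ennreal (gauss_pdf mu (t\<^sup>2 *\<^sub>R mat 1) x * gauss_pdf (A *v x) (sg\<^sup>2 *\<^sub>R mat 1) y) \<partial>lborel) \<partial>lborel)
          = (\<integral>\<^sup>+x. ennreal (gauss_pdf mu (t\<^sup>2 *\<^sub>R mat 1) x) * (\<integral>\<^sup>+y. ennreal (gauss_pdf (A *v x) (sg\<^sup>2 *\<^sub>R mat 1) y) \<partial>lborel) \<partial>lborel)"
        using sg t
        by (intro nn_integral_cong, subst nn_integral_cmult[symmetric])
           (auto simp: ennreal_mult gauss_pdf_nonneg spd_scaled_id)
      also have "\<dots> = (\<integral>\<^sup>+x. ennreal (gauss_pdf mu (t\<^sup>2 *\<^sub>R mat 1) x) \<partial>lborel)"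
        using sg by (simp add: gauss_pdf_integral spd_scaled_id)
      also have "\<dots> = 1" using t by (simp add: gauss_pdf_integral spd_scaled_id)
      finally show ?thesis .
    qed
    have I2: "(\<integral>\<^sup>+y. (\<integral>\<^sup>+x. ennreal (gauss_pdf mu (t\<^sup>2 *\<^sub>R mat 1) x * gauss_pdf (A *v x) (sg\<^sup>2 *\<^sub>R mat 1) y) \<partial>lborel) \<partial>lborel) = ennreal c"
    proof -
      have c0: "c \<ge> 0" unfolding c_def using K1pos K2pos by simp
      have "(\<integral>\<^sup>+y. (\<integral>\<^sup>+x. ennreal (gauss_pdf mu (t\<^sup>2 *\<^sub>R mat 1) x * gauss_pdf (A *v x) (sg\<^sup>2 *\<^sub>R mat 1) y) \<partial>lborel) \<partial>lborel)
          = (\<integral>\<^sup>+y. ennreal (c * gauss_pdf (A *v mu) Sg y) * (\<integral>\<^sup>+x. ennreal (gauss_pdf (m y) (matrix_inv P) x) \<partial>lborel) \<partial>lborel)"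
        unfolding LR using c0 spdS spdPi
        by (intro nn_integral_cong, subst nn_integral_cmult[symmetric])
           (auto simp: ennreal_mult[symmetric] gauss_pdf_nonneg mult.assoc)
      also have "\<dots> = (\<integral>\<^sup>+y. ennreal c * ennreal (gauss_pdf (A *v mu) Sg y) \<partial>lborel)"
        using spdPi c0 spdS by (simp add: gauss_pdf_integral ennreal_mult gauss_pdf_nonneg)
      also have "\<dots> = ennreal c"
        by (subst nn_integral_cmult) (auto simp: gauss_pdf_integral[OF spdS])
      finally show ?thesis .
    qed
    have "ennreal c = 1" using pair_sigma_finite.Fubini'[OF pair_lborel meas] I1 I2 by simp
    then show ?thesis by simp
  qed
  show ?thesis using LR[of x y] unfolding c1 Sg_def m_def P_def post_cov_prec by simp
qed



lemma gauss_pdf_integrable: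
  assumes "spd S" shows "integrable lborel (gauss_pdf mu S)"
  by (rule integrableI_nonneg) (auto simp: gauss_pdf_integral[OF assms] gauss_pdf_nonneg[OF assms])

lemma gauss_pdf_integral_L:
  assumes "spd S" shows "(\<integral>x. gauss_pdf mu S x \<partial>lborel) = 1"
  by (subst integral_eq_nn_integral) (auto simp: gauss_pdf_integral[OF assms] gauss_pdf_nonneg[OF assms])

lemma measure_density_mix:
  fixes f :: "'j \<Rightarrow> 'a \<Rightarrow> real"
  assumes J: "finite J" and fm: "\<And>j. j\<in>J \<Longrightarrow> f j \<in> borel_measurable M"
    and f0: "\<And>j x. j\<in>J \<Longrightarrow> 0 \<le> f j x" and c0: "\<And>j. j\<in>J \<Longrightarrow> 0 \<le> c j" and B: "B \<in> sets M"
    and ps: "\<And>j. j\<in>J \<Longrightarrow> prob_space (density M (\<lambda>x. ennreal (f j x)))"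
  shows "measure (density M (\<lambda>x. ennreal (\<Sum>j\<in>J. c j * f j x))) B
       = (\<Sum>j\<in>J. c j * measure (density M (\<lambda>x. ennreal (f j x))) B)"
proof -
  have m1: "(\<lambda>x. ennreal (\<Sum>j\<in>J. c j * f j x)) \<in> borel_measurable M"
    using fm by measurable
  have "emeasure (density M (\<lambda>x. ennreal (\<Sum>j\<in>J. c j * f j x))) B
      = (\<integral>\<^sup>+x. ennreal (\<Sum>j\<in>J. c j * f j x) * indicator B x \<partial>M)"
    by (rule emeasure_density[OF m1 B])
  also have "\<dots> = (\<integral>\<^sup>+x. (\<Sum>j\<in>J. ennreal (c j) * (ennreal (f j x) * indicator B x)) \<partial>M)"
  proof (rule nn_integral_cong)
    fix x
    have "ennreal (\<Sum>j\<in>J. c j * f j x) = (\<Sum>j\<in>J. ennreal (c j) * ennreal (f j x))"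
      using c0 f0 by (simp add: sum_ennreal[symmetric] ennreal_mult)
    then show "ennreal (\<Sum>j\<in>J. c j * f j x) * indicator B x = (\<Sum>j\<in>J. ennreal (c j) * (ennreal (f j x) * indicator B x))"
      by (simp add: sum_distrib_right mult.assoc)
  qed
  also have "\<dots> = (\<Sum>j\<in>J. ennreal (c j) * (\<integral>\<^sup>+x. ennreal (f j x) * indicator B x \<partial>M))"
    using fm B by (simp add: nn_integral_sum nn_integral_cmult)
  also have "\<dots> = (\<Sum>j\<in>J. ennreal (c j) * emeasure (density M (\<lambda>x. ennreal (f j x))) B)"
    using fm B by (simp add: emeasure_density)
  also have "\<dots> = (\<Sum>j\<in>J. ennreal (c j * measure (density M (\<lambda>x. ennreal (f j x))) B))"
  proof (intro sum.cong refl)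
    fix j assume j: "j \<in> J"
    have "finite_measure (density M (\<lambda>x. ennreal (f j x)))" using ps[OF j] by (simp add: prob_space_def)
    then show "ennreal (c j) * emeasure (density M (\<lambda>x. ennreal (f j x))) B
        = ennreal (c j * measure (density M (\<lambda>x. ennreal (f j x))) B)"
      using c0[OF j] by (simp add: finite_measure.emeasure_eq_measure ennreal_mult)
  qed
  also have "\<dots> = ennreal (\<Sum>j\<in>J. c j * measure (density M (\<lambda>x. ennreal (f j x))) B)"
    using c0 by (intro sum_ennreal) (simp add: measure_nonneg)
  finally show ?thesis
    unfolding measure_def using c0 by (simp add: sum_nonneg measure_nonneg)
qed

lemma mix_bound:
  fixes p a :: "nat \<Rightarrow> real"
  assumes "js \<in> J" "finite J" "\<And>j. j\<in>J \<Longrightarrow> 0 \<le> p j" "(\<Sum>j\<in>J. p j) = 1"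
    "\<And>j. j\<in>J \<Longrightarrow> 0 \<le> a j \<and> a j \<le> 1"
  shows "\<bar>(\<Sum>j\<in>J. p j * a j) - a js\<bar> \<le> (\<Sum>j\<in>J - {js}. p j)"
proof -
  have s1: "(\<Sum>j\<in>J. p j) = p js + (\<Sum>j\<in>J - {js}. p j)"
    using assms(1,2) by (simp add: sum.remove)
  have s2: "(\<Sum>j\<in>J. p j * a j) = p js * a js + (\<Sum>j\<in>J - {js}. p j * a j)"
    using assms(1,2) by (simp add: sum.remove)
  have "(\<Sum>j\<in>J. p j * a j) - a js = (\<Sum>j\<in>J - {js}. p j * (a j - a js))"
  proof -
    have e: "(\<Sum>j\<in>J - {js}. p j * (a j - a js)) = (\<Sum>j\<in>J - {js}. p j * a j) - (\<Sum>j\<in>J - {js}. p j) * a js"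
      by (simp add: right_diff_distrib sum_subtractf sum_distrib_right)
    have "a js = p js * a js + (\<Sum>j\<in>J - {js}. p j) * a js"
      using s1 assms(4) by (metis distrib_right mult_1)
    then show ?thesis unfolding s2 e by linarith
  qed
  also have "\<bar>\<dots>\<bar> \<le> (\<Sum>j\<in>J - {js}. \<bar>p j * (a j - a js)\<bar>)" by (rule sum_abs)
  also have "\<dots> \<le> (\<Sum>j\<in>J - {js}. p j)"
  proof (rule sum_mono)
    fix j assume j: "j \<in> J - {js}"
    have "\<bar>a j - a js\<bar> \<le> 1" using assms(5)[of j] assms(5)[OF assms(1)] j by auto
    then have "p j * \<bar>a j - a js\<bar> \<le> p j * 1" using assms(3)[of j] j by (intro mult_left_mono) auto
    then show "\<bar>p j * (a j - a js)\<bar> \<le> p j" using assms(3)[of j] j by (simp add: abs_mult)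
  qed
  finally show ?thesis .
qed



theorem theorem4:
  fixes A :: "real^'n^'m" and sg :: real and M :: nat
    and w :: "nat \<Rightarrow> real" and mu :: "nat \<Rightarrow> real^'n" and tau :: "nat \<Rightarrow> real"
    and ystar :: "real^'m" and C delta0 :: real and jstar :: nat
  defines "ell \<equiv> (\<lambda>j. sel_score A sg (mu j) (tau j) ystar)"
  assumes sigma_pos: "sg > 0"
    and M2: "2 \<le> M"
    and tau_pos: "\<forall>j<M. tau j > 0"
    and w_nonneg: "\<forall>j<M. w j \<ge> 0"
    and w_sum: "(\<Sum>j<M. w j) = 1"
    and C_gt: "C > 1"
    and w_ratio: "\<forall>i<M. \<forall>j<M. 1 / C \<le> w i / w j \<and> w i / w j \<le> C"
    and jstar_lt: "jstar < M"
    and jstar_unique: "\<forall>j<M. j \<noteq> jstar \<longrightarrow> ell jstar < ell j"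
    and delta0_pos: "delta0 > 0"
    and gap: "(1 / real CARD('m)) * (Min (ell ` ({..<M} - {jstar})) - ell jstar) \<ge> delta0"
  shows "(\<Sum>j\<in>{..<M} - {jstar}. post_weight M w mu tau A sg ystar j)
           \<le> C * real M * exp (- real CARD('m) * delta0)
         \<and> tv_dist (bayes_posterior M w mu tau A sg ystar)
           (normal_measure (post_mean A sg (mu jstar) (tau jstar) ystar)
                           (post_cov A sg (tau jstar)))
           \<le> C * real M * exp (- real CARD('m) * delta0)"
proof -
  let ?m = "real CARD('m)"
  let ?E = "exp (- real CARD('m) * delta0)"
  have wpos: "w j > 0" if j: "j < M" for j
  proof -
    have "1/C \<le> w j / w j" using w_ratio j by blast
    moreover have "1/C > 0" using C_gt by simp
    ultimately have "w j \<noteq> 0" by auto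
    with w_nonneg j show "w j > 0" by auto
  qed
  define phi where "phi j = gauss_pdf (A *v mu j) (marg_cov A sg (tau j)) ystar" for j
  define D where "D = (\<Sum>i<M. w i * phi i)"
  define pw where "pw j = post_weight M w mu tau A sg ystar j" for j
  have spdS: "spd (marg_cov A sg t)" for t by (rule spd_marg[OF sigma_pos])
  have phipos: "phi j > 0" for j unfolding phi_def by (rule gauss_pdf_pos[OF spdS])
  have Dpos: "D > 0" unfolding D_def
    using M2 wpos phipos by (intro sum_pos) (auto simp: lessThan_empty_iff)
  have pw_eq: "pw j = w j * phi j / D" for j
    unfolding pw_def post_weight_def phi_def D_def ..
  have pw_nonneg: "0 \<le> pw j" if "j < M" for j
    unfolding pw_eq using wpos[OF that] phipos[of j] Dpos by simp
  have pw_sum: "(\<Sum>j<M. pw j) = 1"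
    unfolding pw_eq using Dpos by (simp add: sum_divide_distrib[symmetric] D_def)
  have mpos: "?m > 0" by simp
  have phi_ell: "phi j = exp (- ell j) / sqrt ((2*pi)^CARD('m))" for j
  proof -
    have dpos: "det (marg_cov A sg (tau j)) > 0" by (rule spd_det_pos[OF spdS])
    have sq: "sqrt (det (marg_cov A sg (tau j))) = exp ((1/2) * ln (det (marg_cov A sg (tau j))))"
      using dpos by (simp add: powr_half_sqrt[symmetric] powr_def)
    show ?thesis
      unfolding phi_def gauss_pdf_def ell_def sel_score_def sel_s_def
      by (simp add: real_sqrt_mult sq exp_add exp_diff exp_minus field_simps) (simp add: exp_add[symmetric] add_divide_distrib)
  qed
  have gapm: "ell j - ell jstar \<ge> ?m * delta0" if j: "j < M" "j \<noteq> jstar" for j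
  proof -
    have "Min (ell ` ({..<M} - {jstar})) \<le> ell j" using j by (intro Min_le) auto
    moreover have "Min (ell ` ({..<M} - {jstar})) - ell jstar \<ge> ?m * delta0"
      using gap mpos by (simp add: field_simps)
    ultimately show ?thesis by linarith
  qed
  have bound_j: "pw j \<le> C * ?E" if j: "j < M" "j \<noteq> jstar" for j
  proof -
    have ws: "w jstar > 0" by (rule wpos[OF jstar_lt])
    have D_ge: "w jstar * phi jstar \<le> D"
      unfolding D_def using jstar_lt wpos phipos
      by (intro member_le_sum) (auto intro: less_imp_le)
    have "pw j = w j * phi j / D" by (rule pw_eq)
    also have "\<dots> \<le> w j * phi j / (w jstar * phi jstar)"
      using D_ge wpos[OF j(1)] phipos[of j] phipos[of jstar] ws Dpos
      by (intro divide_left_mono) auto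
    also have "\<dots> = (w j / w jstar) * exp (ell jstar - ell j)"
      unfolding phi_ell by (simp add: exp_diff exp_minus field_simps)
    also have "\<dots> \<le> C * ?E"
    proof (rule mult_mono)
      show "w j / w jstar \<le> C" using w_ratio j jstar_lt by blast
      show "exp (ell jstar - ell j) \<le> ?E" using gapm[OF j] by simp
    qed (use C_gt in auto)
    finally show ?thesis .
  qed
  have part1: "(\<Sum>j\<in>{..<M} - {jstar}. pw j) \<le> C * real M * ?E"
  proof -
    have "(\<Sum>j\<in>{..<M} - {jstar}. pw j) \<le> (\<Sum>j\<in>{..<M} - {jstar}. C * ?E)"
      by (intro sum_mono bound_j) auto
    also have "\<dots> = real (M - 1) * (C * ?E)" using jstar_lt by simp
    also have "\<dots> \<le> real M * (C * ?E)" using C_gt by (intro mult_right_mono) auto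
    finally show ?thesis by (simp add: mult_ac)
  qed
  define q where "q j = gauss_pdf (post_mean A sg (mu j) (tau j) ystar) (post_cov A sg (tau j))" for j
  have spdQ: "spd (post_cov A sg (tau j))" if "j < M" for j
    unfolding post_cov_prec using spd_inv(1)[OF spd_prec[OF sigma_pos tau_pos[rule_format, OF that]]] .
  have joint: "mix_prior M w mu tau x * lin_gauss_lik A sg ystar x = (\<Sum>j<M. (w j * phi j) * q j x)" for x
    unfolding mix_prior_def lin_gauss_lik_def sum_distrib_right
  proof (rule sum.cong[OF refl])
    fix j assume "j \<in> {..<M}"
    then have t: "tau j > 0" using tau_pos by auto
    show "w j * gauss_pdf (mu j) ((tau j)\<^sup>2 *\<^sub>R mat 1) x * gauss_pdf (A *v x) (sg\<^sup>2 *\<^sub>R mat 1) ystar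
        = w j * phi j * q j x"
      unfolding phi_def q_def by (simp add: mult.assoc conjugacy[OF sigma_pos t])
  qed
  have Z: "(\<integral>z. mix_prior M w mu tau z * lin_gauss_lik A sg ystar z \<partial>lborel) = D"
  proof -
    have "(\<integral>z. mix_prior M w mu tau z * lin_gauss_lik A sg ystar z \<partial>lborel)
        = (\<integral>z. (\<Sum>j<M. (w j * phi j) * q j z) \<partial>lborel)" by (simp add: joint)
    also have "\<dots> = (\<Sum>j<M. (w j * phi j) * (\<integral>z. q j z \<partial>lborel))"
      using spdQ by (simp add: integral_sum gauss_pdf_integrable q_def)
    also have "\<dots> = D" unfolding D_def q_def using spdQ by (simp add: gauss_pdf_integral_L)
    finally show ?thesis .
  qed
  have post_eq: "bayes_posterior M w mu tau A sg ystar = density lborel (\<lambda>x. ennreal (\<Sum>j<M. pw j * q j x))"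
    unfolding bayes_posterior_def Z unfolding joint
    by (simp add: pw_eq sum_divide_distrib)
  define Q where "Q j = normal_measure (post_mean A sg (mu j) (tau j) ystar) (post_cov A sg (tau j))" for j
  have Q_eq: "Q j = density lborel (\<lambda>x. ennreal (q j x))" for j
    unfolding Q_def q_def normal_measure_def ..
  have meas: "measure (bayes_posterior M w mu tau A sg ystar) B = (\<Sum>j<M. pw j * measure (Q j) B)"
    if B: "B \<in> sets lborel" for B
    unfolding post_eq Q_eq
  proof (rule measure_density_mix)
    show "\<And>j. j \<in> {..<M} \<Longrightarrow> q j \<in> borel_measurable lborel" unfolding q_def by measurable
    show "\<And>j x. j \<in> {..<M} \<Longrightarrow> 0 \<le> q j x" unfolding q_def using spdQ gauss_pdf_nonneg by auto
    show "\<And>j. j \<in> {..<M} \<Longrightarrow> 0 \<le> pw j" using pw_nonneg by auto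
    show "\<And>j. j \<in> {..<M} \<Longrightarrow> prob_space (density lborel (\<lambda>x. ennreal (q j x)))"
      unfolding q_def normal_measure_def[symmetric] using spdQ prob_space_normal_measure by auto
  qed (use B in auto)
  have part2: "tv_dist (bayes_posterior M w mu tau A sg ystar) (Q jstar) \<le> C * real M * ?E"
    unfolding tv_dist_def
  proof (rule cSUP_least)
    show "sets (bayes_posterior M w mu tau A sg ystar) \<noteq> {}" by (metis empty_iff sets.empty_sets)
  next
    fix B assume "B \<in> sets (bayes_posterior M w mu tau A sg ystar)"
    then have B: "B \<in> sets lborel" unfolding post_eq by simp
    have "\<bar>measure (bayes_posterior M w mu tau A sg ystar) B - measure (Q jstar) B\<bar>
        = \<bar>(\<Sum>j<M. pw j * measure (Q j) B) - measure (Q jstar) B\<bar>" by (simp add: meas[OF B])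
    also have "\<dots> \<le> (\<Sum>j\<in>{..<M} - {jstar}. pw j)"
    proof (rule mix_bound)
      show "jstar \<in> {..<M}" using jstar_lt by simp
      show "\<And>j. j \<in> {..<M} \<Longrightarrow> 0 \<le> pw j" using pw_nonneg by auto
      show "(\<Sum>j\<in>{..<M}. pw j) = 1" using pw_sum by simp
      show "\<And>j. j \<in> {..<M} \<Longrightarrow> 0 \<le> measure (Q j) B \<and> measure (Q j) B \<le> 1"
      proof -
        fix j assume "j \<in> {..<M}"
        then have "prob_space (Q j)" unfolding Q_def using spdQ prob_space_normal_measure by auto
        then show "0 \<le> measure (Q j) B \<and> measure (Q j) B \<le> 1"
          by (simp add: prob_space.prob_le_1 measure_nonneg)
      qed
    qed simp
    also have "\<dots> \<le> C * real M * ?E" by (rule part1)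
    finally show "\<bar>measure (bayes_posterior M w mu tau A sg ystar) B - measure (Q jstar) B\<bar> \<le> C * real M * ?E" .
  qed
  show ?thesis
    using part1 part2 unfolding pw_def Q_def by simp
qed


end
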